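(* Let $N\ge 2$ and let $\mathbf{g}=\mathbf{1}_{[0,W-1]}\in\mathbb{R}^N$ be the rectangular window ($\mathbf{g}[n]=1$ for $0\le n\le W-1$, $\mathbf{g}[n]=0$ for $W\le n\le N-1$). Suppose (1) $N/2<W<N$, and (2) $N$ is coprime to each of the integers $2W-N,2W-N+1,\dots,W$ (which holds in particular if $N$ is prime). Then for every $\mathbf{x}\in\mathbb{C}^N$, the LS Algorithm described in the context, applied to the noise-free STFT magnitude $|\mathbf{X}[m,k]|^2$ of $\mathbf{x}$ with this window and $L=1$, outputs $e^{i\phi}\mathbf{x}$ for some $\phi\in\mathbb{R}$.
   Context: Signals and windows are indexed by $\{0,\dots,N-1\}$ and extended $N$-periodically. The STFT of $\mathbf{x}\in\mathbb{C}^N$ with window $\mathbf{g}$ and step $L=1$ is $\mathbf{X}[m,k]=\sum_{n=0}^{N-1}\mathbf{x}[n]\mathbf{g}[m-n]e^{-2\pi i kn/N}$ for $m,k=0,\dots,N-1$. The DFT of $\mathbf{v}\in\mathbb{C}^N$ is $(\mathbf{F}\mathbf{v})[k]=\sum_n \mathbf{v}[n]e^{-2\pi i kn/N}$. For $\mathbf{M}\in\mathbb{C}^{N\times N}$, $\mathrm{diag}(\mathbf{M},\ell)$ is the vector $(\mathbf{M}_{i,(i+\ell)\bmod N})_{i=0}^{N-1}$. LS Algorithm: given $\mathbf{Y}[m,k]$, (1) compute $\mathbf{Z}[m,\ell]=\sum_{k=0}^{N-1}\mathbf{Y}[m,k]e^{-2\pi i k\ell/N}$ and $\mathbf{z}_\ell=(\mathbf{Z}[m,\ell])_{m}$;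 (2) for each $\ell=0,\dots,N-1$ compute $\mathbf{x}_\ell=\frac1N\mathbf{G}_\ell^{-1}\mathbf{z}_\ell$, where $\mathbf{G}_\ell$ is the $N\times N$ circulant matrix with first column $(\mathbf{g}[m]\overline{\mathbf{g}[(m-\ell)\bmod N]})_{m=0}^{N-1}$ (computed via the DFT diagonalization of $\mathbf{G}_\ell$); (3) form $\mathbf{X}$ with $\mathrm{diag}(\mathbf{X},\ell)=\mathbf{x}_\ell$ for all $\ell$; (4) output $\sqrt{\lambda_{\max}}u_{\max}$, with $\lambda_{\max}$ the largest eigenvalue of $\mathbf{X}$ and $u_{\max}$ an associated unit eigenvector. *)

theory Defs
  imports "HOL-Analysis.Analysis" "Jordan_Normal_Form.Matrix" "Jordan_Normal_Form.Char_Poly"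
begin

text \<open>Signals and windows are vectors of dimension N (indices 0..N-1), extended N-periodically
  via reduction mod N.\<close>

definition per :: "nat \<Rightarrow> int \<Rightarrow> nat" where
  "per N i = nat (i mod int N)"

definition rect_window :: "nat \<Rightarrow> nat \<Rightarrow> complex vec" where
  "rect_window N W = vec N (\<lambda>n. if n < W then 1 else 0)"

text \<open>STFT with step L = 1.\<close>
definition stft :: "nat \<Rightarrow> complex vec \<Rightarrow> complex vec \<Rightarrow> nat \<Rightarrow> nat \<Rightarrow> complex" where
  "stft N g x m k = (\<Sum>n<N. x $ n * g $ per N (int m - int n)
       * exp (- 2 * pi * \<i> * of_nat k * of_nat n / of_nat N))"

definition LS_Z :: "nat \<Rightarrow> (nat \<Rightarrow> nat \<Rightarrow> complex) \<Rightarrow> nat \<Rightarrow> complex vec" where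
  "LS_Z N Y l = vec N (\<lambda>m. \<Sum>k<N. Y m k * exp (- 2 * pi * \<i> * of_nat k * of_nat l / of_nat N))"

definition LS_G :: "nat \<Rightarrow> complex vec \<Rightarrow> nat \<Rightarrow> complex mat" where
  "LS_G N g l = mat N N (\<lambda>(i, j).
      (let m = per N (int i - int j) in g $ m * cnj (g $ per N (int m - int l))))"

definition minv :: "complex mat \<Rightarrow> complex mat" where
  "minv A = (THE B. B \<in> carrier_mat (dim_row A) (dim_row A)
                 \<and> A * B = 1\<^sub>m (dim_row A) \<and> B * A = 1\<^sub>m (dim_row A))"

definition LS_x :: "nat \<Rightarrow> complex vec \<Rightarrow> (nat \<Rightarrow> nat \<Rightarrow> complex) \<Rightarrow> nat \<Rightarrow> complex vec" where
  "LS_x N g Y l = (1 / of_nat N) \<cdot>\<^sub>v (minv (LS_G N g l) *\<^sub>v LS_Z N Y l)"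

text \<open>Step (3): the matrix X with diag(X,l) = x_l, i.e. X[i,(i+l) mod N] = x_l[i].\<close>
definition LS_X :: "nat \<Rightarrow> complex vec \<Rightarrow> (nat \<Rightarrow> nat \<Rightarrow> complex) \<Rightarrow> complex mat" where
  "LS_X N g Y = mat N N (\<lambda>(i, j). LS_x N g Y (per N (int j - int i)) $ i)"

text \<open>Step (4): v is a possible output: v = sqrt(lambda_max) u_max, with lambda_max the largest
  (real) eigenvalue of X and u_max an associated unit eigenvector.\<close>
definition LS_output :: "nat \<Rightarrow> complex vec \<Rightarrow> (nat \<Rightarrow> nat \<Rightarrow> complex) \<Rightarrow> complex vec \<Rightarrow> bool" where
  "LS_output N g Y v \<longleftrightarrow>
     (\<exists>(lam :: real) u.
        eigenvector (LS_X N g Y) u (complex_of_real lam)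
      \<and> (\<forall>mu :: real. eigenvalue (LS_X N g Y) (complex_of_real mu) \<longrightarrow> mu \<le> lam)
      \<and> (\<Sum>i<N. (cmod (u $ i))\<^sup>2) = 1
      \<and> v = complex_of_real (sqrt lam) \<cdot>\<^sub>v u)"

end

theory Submission
  imports Defs
begin



definition E :: "nat \<Rightarrow> int \<Rightarrow> complex" where
  "E N t = exp (2 * pi * \<i> * of_int t / of_nat N)"

lemma E_add: "E N (a + b) = E N a * E N b"
  unfolding E_def by (simp add: exp_add[symmetric] add_divide_distrib distrib_left)

lemma E_0[simp]: "E N 0 = 1" unfolding E_def by simp

lemma E_pow: "E N a ^ n = E N (int n * a)"
  unfolding E_def by (simp add: exp_of_nat_mult[symmetric] mult_ac)

lemma E_cnj: "cnj (E N a) = E N (- a)"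
  unfolding E_def by (simp add: exp_cnj)

lemma E_eq_1: assumes "N > 0" shows "E N t = 1 \<longleftrightarrow> int N dvd t"
proof -
  have "E N t = 1 \<longleftrightarrow> (\<exists>n::int. 2 * pi * of_int t / of_nat N = 2 * pi * of_int n)"
    unfolding E_def exp_eq_1 by (simp add: mult_ac)
  also have "\<dots> \<longleftrightarrow> (\<exists>n::int. of_int t = of_nat N * (of_int n :: real))"
    using assms by (auto simp: field_simps)
  also have "\<dots> \<longleftrightarrow> (\<exists>n::int. t = int N * n)"
    by (metis of_int_eq_iff of_int_mult of_int_of_nat_eq)
  finally show ?thesis by (auto simp: dvd_def)
qed

lemma E_mod: assumes "N > 0" shows "E N (t mod int N) = E N t"
proof -
  have "t = t mod int N + int N * (t div int N)" by simp
  hence "E N t = E N (t mod int N) * E N (int N * (t div int N))"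
    by (metis E_add)
  moreover have "E N (int N * (t div int N)) = 1" using E_eq_1[OF assms] by simp
  ultimately show ?thesis by simp
qed

lemma E_conv: "exp (- 2 * pi * \<i> * of_nat k * of_nat n / of_nat N) = E N (- (int k * int n))"
  unfolding E_def by (simp add: mult_ac)

lemma E_nz[simp]: "E N t \<noteq> 0" unfolding E_def by simp

lemma orth: assumes "N > 0"
  shows "(\<Sum>k<N. E N (int k * t)) = (if int N dvd t then of_nat N else 0)"
proof (cases "int N dvd t")
  case True
  then have "\<And>k. E N (int k * t) = 1" using E_eq_1[OF assms] by auto
  then show ?thesis using True by simp
next
  case False
  have r: "E N t \<noteq> 1" using E_eq_1[OF assms] False by simp
  have "(\<Sum>k<N. E N (int k * t)) = (\<Sum>k<N. E N t ^ k)" by (simp add: E_pow)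
  also have "\<dots> = (1 - E N t ^ N) / (1 - E N t)" using r by (simp add: sum_gp_strict)
  also have "E N t ^ N = 1" using E_eq_1[OF assms] by (simp add: E_pow)
  finally show ?thesis using False by simp
qed

lemma per_lt: "N > 0 \<Longrightarrow> per N t < N"
  unfolding per_def by (simp add: nat_less_iff)

lemma int_per: "N > 0 \<Longrightarrow> int (per N t) = t mod int N"
  unfolding per_def by simp

lemma per_of_nat: "n < N \<Longrightarrow> per N (int n) = n"
  unfolding per_def by (simp add: nat_mod_as_int[symmetric])

lemma per_mod: "per N (t mod int N) = per N t"
  unfolding per_def by simp

lemma shift_sum:
  fixes f :: "int \<Rightarrow> 'a::comm_monoid_add"
  assumes N: "N > 0" and per: "\<And>t. f t = f (t mod int N)"
  shows "(\<Sum>m<N. f (int m + s)) = (\<Sum>m<N. f (int m))"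
proof -
  define h where "h m = nat ((int m + s) mod int N)" for m
  have bij: "bij_betw h {..<N} {..<N}"
  proof (rule bij_betw_byWitness[where f' = "\<lambda>p. nat ((int p - s) mod int N)"])
    show "\<forall>a\<in>{..<N}. nat ((int (h a) - s) mod int N) = a"
      using N by (auto simp: h_def mod_diff_left_eq nat_mod_as_int)
    show "\<forall>a\<in>{..<N}. h (nat ((int a - s) mod int N)) = a"
      using N by (auto simp: h_def mod_add_left_eq nat_mod_as_int)
    show "h ` {..<N} \<subseteq> {..<N}" using N by (auto simp: h_def nat_less_iff)
    show "(\<lambda>p. nat ((int p - s) mod int N)) ` {..<N} \<subseteq> {..<N}" using N by (auto simp: nat_less_iff)
  qed
  have "(\<Sum>m<N. f (int m + s)) = (\<Sum>m<N. f (int (h m)))"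
    using N by (intro sum.cong refl) (simp add: h_def per[of "int m + s" for m])
  also have "\<dots> = (\<Sum>m<N. f (int m))"
    using sum.reindex_bij_betw[OF bij, of "\<lambda>p. f (int p)"] by simp
  finally show ?thesis .
qed




lemma stft_E: "stft N g x m k = (\<Sum>n<N. (x $ n * g $ per N (int m - int n)) * E N (- (int k * int n)))"
  unfolding stft_def E_conv by (rule refl)

lemma Z_formula:
  assumes N: "N > 0" and m: "m < N"
  shows "LS_Z N (\<lambda>m k. complex_of_real ((cmod (stft N g x m k))\<^sup>2)) l $ m
       = of_nat N * (\<Sum>n<N. (x $ n * g $ per N (int m - int n)) * cnj (x $ ((n + l) mod N) * g $ per N (int m - int ((n + l) mod N))))"
proof -
  define a where "a n = x $ n * g $ per N (int m - int n)" for n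
  have sq: "complex_of_real ((cmod z)\<^sup>2) = z * cnj z" for z by (rule complex_norm_square)
  have "LS_Z N (\<lambda>m k. complex_of_real ((cmod (stft N g x m k))\<^sup>2)) l $ m
     = (\<Sum>k<N. ((\<Sum>n<N. a n * E N (- (int k * int n))) * (\<Sum>n'<N. cnj (a n') * E N (int k * int n'))) * E N (- (int k * int l)))"
    unfolding LS_Z_def index_vec[OF m] sq stft_E E_conv cnj_sum complex_cnj_mult E_cnj a_def
    by (simp add: mult.assoc)
  also have "\<dots> = (\<Sum>k<N. \<Sum>n<N. \<Sum>n'<N. a n * cnj (a n') * E N (int k * (int n' - int n - int l)))"
    by (simp add: sum_distrib_left sum_distrib_right E_add[symmetric] algebra_simps)
      (rule sum.cong[OF refl], rule sum.swap)
  also have "\<dots> = (\<Sum>n<N. \<Sum>n'<N. a n * cnj (a n') * (\<Sum>k<N. E N (int k * (int n' - int n - int l))))"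
    by (subst sum.swap, rule sum.cong, simp, subst sum.swap, simp add: sum_distrib_left)
  also have "\<dots> = (\<Sum>n<N. \<Sum>n'<N. a n * cnj (a n') * (if n' = (n + l) mod N then of_nat N else 0))"
  proof (intro sum.cong refl)
    fix n n' assume "n' \<in> {..<N}"
    hence "n' < N" by simp
    have "int N dvd (int n' - int n - int l) \<longleftrightarrow> n' = (n + l) mod N"
    proof -
      have "int N dvd (int n' - int n - int l) \<longleftrightarrow> int n' mod int N = int (n + l) mod int N"
        by (simp add: mod_eq_dvd_iff algebra_simps)
      also have "\<dots> \<longleftrightarrow> n' mod N = (n + l) mod N"
        by (metis of_nat_eq_iff zmod_int)
      also have "\<dots> \<longleftrightarrow> n' = (n + l) mod N" using \<open>n' < N\<close> by simp
      finally show ?thesis .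
    qed
    then show "a n * cnj (a n') * (\<Sum>k<N. E N (int k * (int n' - int n - int l)))
      = a n * cnj (a n') * (if n' = (n + l) mod N then of_nat N else 0)"
      by (simp add: orth[OF N])
  qed
  also have "\<dots> = (\<Sum>n<N. of_nat N * (a n * cnj (a ((n + l) mod N))))"
  proof (intro sum.cong refl)
    fix n
    have "(n + l) mod N \<in> {..<N}" using N by simp
    then show "(\<Sum>n'<N. a n * cnj (a n') * (if n' = (n + l) mod N then of_nat N else 0)) =
         of_nat N * (a n * cnj (a ((n + l) mod N)))"
      by (simp add: if_distrib[of "\<lambda>t. a n * cnj (a _) * t"] sum.delta' cong: if_cong) 
  qed
  finally show ?thesis by (simp add: a_def sum_distrib_left)
qed




definition yv :: "nat \<Rightarrow> complex vec \<Rightarrow> nat \<Rightarrow> complex vec" where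
  "yv N x l = vec N (\<lambda>j. x $ j * cnj (x $ ((j + l) mod N)))"

lemma per_shift: assumes N: "N > 0"
  shows "per N (int (per N (int m - int n)) - int l) = per N (int m - int ((n + l) mod N))"
proof -
  have "int (per N (int m - int n)) - int l = (int m - int n) mod int N - int l" using int_per[OF N] by simp
  hence "per N (int (per N (int m - int n)) - int l) = nat (((int m - int n) mod int N - int l) mod int N)"
    unfolding per_def by simp
  also have "((int m - int n) mod int N - int l) mod int N = (int m - int n - int l) mod int N"
    by (simp add: mod_diff_left_eq)
  also have "(int m - int n - int l) = int m - int (n + l)" by simp
  also have "(int m - int (n + l)) mod int N = (int m - int ((n + l) mod N)) mod int N"
    by (simp add: zmod_int mod_diff_right_eq)
  finally show ?thesis unfolding per_def .
qed

lemma G_mult: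
  assumes N: "N > 0" and m: "m < N" and g: "g \<in> carrier_vec N"
  shows "(LS_G N g l *\<^sub>v yv N x l) $ m
       = (\<Sum>n<N. (x $ n * g $ per N (int m - int n)) * cnj (x $ ((n + l) mod N) * g $ per N (int m - int ((n + l) mod N))))"
proof -
  have "(LS_G N g l *\<^sub>v yv N x l) $ m = (\<Sum>j<N. (g $ per N (int m - int j) * cnj (g $ per N (int (per N (int m - int j)) - int l))) * (x $ j * cnj (x $ ((j + l) mod N))))"
    using m unfolding LS_G_def yv_def
    by (simp add: index_mult_mat_vec scalar_prod_def atLeast0LessThan Let_def)
  also have "\<dots> = (\<Sum>n<N. (x $ n * g $ per N (int m - int n)) * cnj (x $ ((n + l) mod N) * g $ per N (int m - int ((n + l) mod N))))"
    by (intro sum.cong refl) (simp add: per_shift[OF N] mult_ac)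
  finally show ?thesis .
qed

lemma Z_eq:
  assumes N: "N > 0" and g: "g \<in> carrier_vec N"
  shows "LS_Z N (\<lambda>m k. complex_of_real ((cmod (stft N g x m k))\<^sup>2)) l = of_nat N \<cdot>\<^sub>v (LS_G N g l *\<^sub>v yv N x l)"
proof (rule eq_vecI)
  fix i assume "i < dim_vec (of_nat N \<cdot>\<^sub>v (LS_G N g l *\<^sub>v yv N x l))"
  hence i: "i < N" by (simp add: LS_G_def)
  have d: "dim_vec (LS_G N g l *\<^sub>v yv N x l) = N" by (simp add: LS_G_def)
  show "LS_Z N (\<lambda>m k. complex_of_real ((cmod (stft N g x m k))\<^sup>2)) l $ i = (of_nat N \<cdot>\<^sub>v (LS_G N g l *\<^sub>v yv N x l)) $ i"
    using index_smult_vec(1)[of i "LS_G N g l *\<^sub>v yv N x l" "of_nat N"] d i Z_formula[OF N i] G_mult[OF N i g] by simp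
qed (simp add: LS_Z_def LS_G_def)




lemma E_per: assumes N: "N > 0" shows "E N (a * (t mod int N)) = E N (a * t)"
proof -
  have "(a * (t mod int N)) mod int N = (a * t) mod int N" by (simp add: mod_mult_right_eq)
  thus ?thesis using E_mod[OF N, of "a * (t mod int N)"] E_mod[OF N, of "a * t"] by simp
qed

lemma inversion:
  assumes N: "N > 0" and n: "n < N"
  shows "(\<Sum>k<N. E N (int k * int n) * (\<Sum>j<N. v j * E N (- (int k * int j)))) = of_nat N * v n"
proof -
  have "(\<Sum>k<N. E N (int k * int n) * (\<Sum>j<N. v j * E N (- (int k * int j))))
      = (\<Sum>k<N. \<Sum>j<N. v j * E N (int k * (int n - int j)))"
    by (simp add: sum_distrib_left E_add[symmetric] algebra_simps)
  also have "\<dots> = (\<Sum>j<N. \<Sum>k<N. v j * E N (int k * (int n - int j)))"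
    by (rule sum.swap)
  also have "\<dots> = (\<Sum>j<N. v j * (\<Sum>k<N. E N (int k * (int n - int j))))"
    by (simp add: sum_distrib_left)
  also have "\<dots> = (\<Sum>j<N. v j * (if j = n then of_nat N else 0))"
  proof (intro sum.cong refl)
    fix j assume "j \<in> {..<N}"
    hence j: "j < N" by simp
    have "int N dvd (int n - int j) \<longleftrightarrow> int n mod int N = int j mod int N" by (simp add: mod_eq_dvd_iff)
    also have "\<dots> \<longleftrightarrow> n mod N = j mod N" by (metis zmod_int of_nat_eq_iff)
    also have "\<dots> \<longleftrightarrow> j = n" using n j by auto
    finally have "int N dvd (int n - int j) \<longleftrightarrow> j = n" .
    thus "v j * (\<Sum>k<N. E N (int k * (int n - int j))) = v j * (if j = n then of_nat N else 0)"
      by (simp add: orth[OF N])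
  qed
  also have "\<dots> = of_nat N * v n" using n by (simp add: if_distrib[of "\<lambda>t. v _ * t"] cong: if_cong)
  finally show ?thesis .
qed

definition cc :: "nat \<Rightarrow> complex vec \<Rightarrow> nat \<Rightarrow> nat \<Rightarrow> complex" where
  "cc N g l p = g $ p * cnj (g $ per N (int p - int l))"

lemma G_entry: "i < N \<Longrightarrow> j < N \<Longrightarrow> LS_G N g l $$ (i, j) = cc N g l (per N (int i - int j))"
  unfolding LS_G_def cc_def by (simp add: Let_def)

lemma G_carrier: "LS_G N g l \<in> carrier_mat N N" unfolding LS_G_def by simp

lemma G_ker:
  assumes N: "N > 0"
    and C: "\<And>k. k < N \<Longrightarrow> (\<Sum>p<N. cc N g l p * E N (- (int k * int p))) \<noteq> 0"
    and v: "v \<in> carrier_vec N" and Gv: "LS_G N g l *\<^sub>v v = 0\<^sub>v N"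
  shows "v = 0\<^sub>v N"
proof -
  define vh where "vh k = (\<Sum>j<N. v $ j * E N (- (int k * int j)))" for k
  have vh0: "vh k = 0" if k: "k < N" for k
  proof -
    define f where "f t = E N (- (int k * t)) * cc N g l (per N t)" for t
    have fper: "f t = f (t mod int N)" for t
      unfolding f_def using E_per[OF N, of "- int k" t] by (simp add: per_mod)
    have Gm: "(LS_G N g l *\<^sub>v v) $ m = (\<Sum>j<N. cc N g l (per N (int m - int j)) * v $ j)" if "m < N" for m
      using that v unfolding LS_G_def by (simp add: index_mult_mat_vec scalar_prod_def atLeast0LessThan Let_def cc_def)
    have "0 = (\<Sum>m<N. E N (- (int k * int m)) * (LS_G N g l *\<^sub>v v) $ m)"
      using Gv by simp
    also have "\<dots> = (\<Sum>m<N. \<Sum>j<N. E N (- (int k * int m)) * cc N g l (per N (int m - int j)) * v $ j)"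
      by (intro sum.cong refl) (simp add: Gm sum_distrib_left mult.assoc)
    also have "\<dots> = (\<Sum>j<N. v $ j * (\<Sum>m<N. E N (- (int k * int m)) * cc N g l (per N (int m - int j))))"
      by (subst sum.swap) (simp add: sum_distrib_left mult_ac)
    also have "\<dots> = (\<Sum>j<N. v $ j * E N (- (int k * int j)) * (\<Sum>p<N. cc N g l p * E N (- (int k * int p))))"
    proof (intro sum.cong refl)
      fix j
      have "(\<Sum>m<N. E N (- (int k * int m)) * cc N g l (per N (int m - int j)))
          = (\<Sum>m<N. E N (- (int k * int j)) * f (int m + - int j))"
        by (intro sum.cong refl) (simp add: f_def E_add[symmetric] algebra_simps)
      also have "\<dots> = E N (- (int k * int j)) * (\<Sum>m<N. f (int m))"
        using shift_sum[of N f "- int j", OF N fper] by (simp add: sum_distrib_left[symmetric])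
      also have "(\<Sum>m<N. f (int m)) = (\<Sum>p<N. cc N g l p * E N (- (int k * int p)))"
        by (intro sum.cong refl) (simp add: f_def per_of_nat mult.commute)
      finally show "v $ j * (\<Sum>m<N. E N (- (int k * int m)) * cc N g l (per N (int m - int j)))
        = v $ j * E N (- (int k * int j)) * (\<Sum>p<N. cc N g l p * E N (- (int k * int p)))" by simp
    qed
    also have "\<dots> = vh k * (\<Sum>p<N. cc N g l p * E N (- (int k * int p)))"
      unfolding vh_def by (simp add: sum_distrib_right)
    finally show ?thesis using C[OF k] by simp
  qed
  show ?thesis
  proof (rule eq_vecI)
    fix n assume "n < dim_vec (0\<^sub>v N :: complex vec)"
    hence n: "n < N" by simp
    have "of_nat N * v $ n = 0"
      using inversion[OF N n, of "\<lambda>j. v $ j"] vh0 unfolding vh_def by simp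
    thus "v $ n = 0\<^sub>v N $ n" using N n by simp
  qed (use v in simp)
qed

lemma G_inv:
  assumes N: "N > 0"
    and C: "\<And>k. k < N \<Longrightarrow> (\<Sum>p<N. cc N g l p * E N (- (int k * int p))) \<noteq> 0"
  shows "invertible_mat (LS_G N g l) \<and> LS_G N g l * minv (LS_G N g l) = 1\<^sub>m N
         \<and> minv (LS_G N g l) * LS_G N g l = 1\<^sub>m N \<and> minv (LS_G N g l) \<in> carrier_mat N N"
proof -
  let ?G = "LS_G N g l"
  have Gc: "?G \<in> carrier_mat N N" by (rule G_carrier)
  have "det ?G \<noteq> 0"
    using det_0_iff_vec_prod_zero_field[OF Gc] G_ker[OF N C] by blast
  from det_non_zero_imp_unit[OF Gc this, of "()"]
  obtain B where B: "B \<in> carrier_mat N N" "?G * B = 1\<^sub>m N" "B * ?G = 1\<^sub>m N"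
    unfolding Units_def ring_mat_def by auto
  have uniq: "B' = B" if "B' \<in> carrier_mat N N" "?G * B' = 1\<^sub>m N" for B'
  proof -
    have "B' = (B * ?G) * B'" by (simp add: B(3) left_mult_one_mat[OF that(1)])
    also have "\<dots> = B * (?G * B')" by (rule assoc_mult_mat[OF B(1) Gc that(1)])
    finally show ?thesis using that(2) right_mult_one_mat[OF B(1)] by simp
  qed
  have dr: "dim_row ?G = N" using Gc by simp
  have m: "minv ?G = B"
    unfolding minv_def dr
    by (rule the_equality) (use B uniq in blast)+
  show ?thesis unfolding m using B Gc
    by (auto simp: invertible_mat_def inverts_mat_def square_mat.simps)
qed




lemma geom: "a \<le> b \<Longrightarrow> (1 - q) * (\<Sum>p\<in>{a..<b}. q ^ p) = q ^ a - (q::complex) ^ b"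
proof (induction b)
  case 0 then show ?case by simp
next
  case (Suc b)
  show ?case
  proof (cases "a = Suc b")
    case True then show ?thesis by simp
  next
    case False
    hence "a \<le> b" using Suc by simp
    hence "{a..<Suc b} = insert b {a..<b}" by auto
    hence "(1 - q) * (\<Sum>p\<in>{a..<Suc b}. q ^ p) = (1 - q) * (q ^ b + (\<Sum>p\<in>{a..<b}. q ^ p))" by simp
    also have "\<dots> = (1 - q) * q ^ b + (1 - q) * (\<Sum>p\<in>{a..<b}. q ^ p)" by (rule distrib_left)
    also have "\<dots> = (1 - q) * q ^ b + (q ^ a - q ^ b)" by (simp only: Suc.IH[OF \<open>a \<le> b\<close>])
    also have "\<dots> = q ^ a - q ^ Suc b" by (simp add: algebra_simps)
    finally show ?thesis .
  qed
qed

lemma per_cases: assumes "p < N" "l < N"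
  shows "per N (int p - int l) = (if l \<le> p then p - l else p + N - l)"
proof (cases "l \<le> p")
  case True
  hence "(int p - int l) mod int N = int p - int l" using assms by (intro mod_pos_pos_trivial) auto
  thus ?thesis using True unfolding per_def by simp
next
  case False
  have "(int p - int l) mod int N = (int p - int l + int N) mod int N" by simp
  also have "\<dots> = int p - int l + int N" using assms False by (intro mod_pos_pos_trivial) auto
  finally show ?thesis using False unfolding per_def by simp
qed

context
  fixes N W :: nat
  assumes N2: "N \<ge> 2" and W1: "N < 2 * W" and W2: "W < N"
    and cop: "\<forall>j \<in> {2 * W - N .. W}. coprime N j"
begin

lemma Npos: "N > 0" using N2 by simp

lemma N_odd: "odd N"
proof
  assume e: "even N"
  have c1: "coprime N W" using cop[rule_format, of W] W1 W2 by simp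
  have c2: "coprime N (W - 1)" using cop[rule_format, of "W - 1"] W1 W2 by simp
  show False
  proof (cases "even W")
    case True
    then show False using coprime_common_divisor[OF c1 e True] by simp
  next
    case False
    hence "even (W - 1)" using W1 by simp
    then show False using coprime_common_divisor[OF c2 e] by simp
  qed
qed

lemma qpow_ne1:
  assumes k: "0 < k" "k < N" and j: "2 * W - N \<le> j" "j \<le> W"
  shows "E N (- int k) ^ j \<noteq> 1"
proof
  assume "E N (- int k) ^ j = 1"
  hence "int N dvd (int j * - int k)" unfolding E_pow E_eq_1[OF Npos] .
  hence "int N dvd int (k * j)" by (simp add: mult.commute)
  hence "N dvd k * j" by (simp only: of_nat_dvd_iff)
  moreover have "coprime N j" using cop j by auto
  ultimately have "N dvd k" using coprime_dvd_mult_left_iff by blast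
  thus False using k by (simp add: nat_dvd_not_less)
qed

lemma rect_C:
  assumes l: "l < N" and k: "k < N"
  shows "(\<Sum>p<N. cc N (rect_window N W) l p * E N (- (int k * int p))) \<noteq> 0"
proof -
  define q where "q = E N (- int k)"
  define S where "S = {p. p < N \<and> p < W \<and> per N (int p - int l) < W}"
  have qp: "E N (- (int k * int p)) = q ^ p" for p unfolding q_def E_pow by (simp add: algebra_simps)
  have ccp: "cc N (rect_window N W) l p = (if p \<in> S then 1 else 0)" if "p < N" for p
    using that per_lt[OF Npos] unfolding cc_def rect_window_def S_def by auto
  have sum: "(\<Sum>p<N. cc N (rect_window N W) l p * E N (- (int k * int p))) = (\<Sum>p\<in>S. q ^ p)"
  proof -
    have "(\<Sum>p<N. cc N (rect_window N W) l p * E N (- (int k * int p))) = (\<Sum>p<N. if p \<in> S then q ^ p else 0)"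
      by (intro sum.cong refl) (simp add: ccp qp)
    also have "\<dots> = (\<Sum>p\<in>{..<N} \<inter> S. q ^ p)" by (simp add: sum.inter_restrict)
    also have "{..<N} \<inter> S = S" unfolding S_def by auto
    finally show ?thesis .
  qed
  have SA: "S = {l..<W}" if "l + W \<le> N"
    unfolding S_def using that l W1 W2 by (auto simp: per_cases split: if_splits)
  have SB: "S = {0..<l + W - N} \<union> {l..<W}" if "N < l + W" "l \<le> W"
    unfolding S_def using that l W1 W2 by (auto simp: per_cases split: if_splits)
  have SC: "S = {0..<l + W - N}" if "W < l"
    unfolding S_def using that l W1 W2 by (auto simp: per_cases split: if_splits)
  have fin: "finite S" unfolding S_def by simp
  show ?thesis
  proof (cases "k = 0")
    case True
    hence q1: "q = 1" unfolding q_def by simp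
    have "S \<noteq> {}"
    proof (cases "l + W \<le> N")
      case True then show ?thesis using SA W1 by auto
    next
      case False
      show ?thesis
      proof (cases "l \<le> W")
        case True then show ?thesis using SB False by auto
      next
        case F2: False then show ?thesis using SC False by auto
      qed
    qed
    hence "card S \<noteq> 0" using fin by simp
    then show ?thesis unfolding sum q1 by simp
  next
    case False
    hence k0: "0 < k" by simp
    have q1: "q \<noteq> 1"
    proof
      assume "q = 1"
      hence "int N dvd - int k" unfolding q_def E_eq_1[OF Npos] .
      hence "N dvd k" by simp
      thus False using k0 k nat_dvd_not_less by blast
    qed
    have qN: "q ^ N = 1" unfolding q_def E_pow E_eq_1[OF Npos] by simp
    have "(1 - q) * (\<Sum>p\<in>S. q ^ p) \<noteq> 0"
    proof (cases "l + W \<le> N")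
      case True
      have "(1 - q) * (\<Sum>p\<in>S. q ^ p) = q ^ l - q ^ W" unfolding SA[OF True]
        using W1 True by (intro geom) simp
      also have "\<dots> = q ^ l * (1 - q ^ (W - l))"
        using W1 True by (simp add: algebra_simps power_add[symmetric])
      also have "\<dots> \<noteq> 0"
        using qpow_ne1[OF k0 k, of "W - l"] True W1 unfolding q_def by (simp add: E_pow)
      finally show ?thesis .
    next
      case F1: False
      show ?thesis
      proof (cases "l \<le> W")
        case True
        have dis: "{0..<l + W - N} \<inter> {l..<W} = {}" using l W2 by auto
        have "(1 - q) * (\<Sum>p\<in>S. q ^ p) = (1 - q) * (\<Sum>p\<in>{0..<l + W - N}. q ^ p) + (1 - q) * (\<Sum>p\<in>{l..<W}. q ^ p)"
          using SB[OF _ True] F1 sum.union_disjoint[OF _ _ dis, of "(^) q"] by (simp add: distrib_left)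
        also have "\<dots> = (1 - q ^ (l + W - N)) + (q ^ l - q ^ W)"
          using geom[of 0 "l + W - N" q] geom[OF True, of q] by simp
        also have "q ^ (l + W - N) = q ^ l * q ^ W"
        proof -
          have "q ^ (l + W - N) = q ^ (l + W - N) * q ^ N" using qN by simp
          also have "\<dots> = q ^ (l + W)" using F1 by (simp add: power_add[symmetric])
          finally show ?thesis by (simp add: power_add)
        qed
        also have "1 - q ^ l * q ^ W + (q ^ l - q ^ W) = (1 + q ^ l) * (1 - q ^ W)"
          by (simp add: algebra_simps)
        also have "\<dots> \<noteq> 0"
        proof -
          have "q ^ W \<noteq> 1" using qpow_ne1[OF k0 k, of W] W1 W2 unfolding q_def by simp
          moreover have "1 + q ^ l \<noteq> 0"
          proof
            assume "1 + q ^ l = 0"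
            hence "q ^ l = -1" by (simp add: add_eq_0_iff)
            hence "(q ^ l) ^ N = -1" using N_odd by simp
            moreover have "(q ^ l) ^ N = 1" by (simp add: power_mult[symmetric] mult.commute power_mult qN)
            ultimately show False by simp
          qed
          ultimately show ?thesis by simp
        qed
        finally show ?thesis .
      next
        case False
        have "(1 - q) * (\<Sum>p\<in>S. q ^ p) = 1 - q ^ (l + W - N)"
          using SC False geom[of 0 "l + W - N" q] by simp
        also have "\<dots> \<noteq> 0"
          using qpow_ne1[OF k0 k, of "l + W - N"] False l W1 unfolding q_def by simp
        finally show ?thesis .
      qed
    qed
    then show ?thesis unfolding sum by auto
  qed
qed

end




lemma yv_carrier: "yv N x l \<in> carrier_vec N" unfolding yv_def by simp

lemma LS_x_eq:
  assumes N: "N > 0" and g: "g \<in> carrier_vec N"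
    and C: "\<And>k. k < N \<Longrightarrow> (\<Sum>p<N. cc N g l p * E N (- (int k * int p))) \<noteq> 0"
  shows "LS_x N g (\<lambda>m k. complex_of_real ((cmod (stft N g x m k))\<^sup>2)) l = yv N x l"
proof -
  let ?G = "LS_G N g l" and ?y = "yv N x l"
  note I = G_inv[OF N C]
  have Mc: "minv ?G \<in> carrier_mat N N" using I by blast
  have Gc: "?G \<in> carrier_mat N N" by (rule G_carrier)
  have "LS_x N g (\<lambda>m k. complex_of_real ((cmod (stft N g x m k))\<^sup>2)) l
      = (1 / of_nat N) \<cdot>\<^sub>v (minv ?G *\<^sub>v (of_nat N \<cdot>\<^sub>v (?G *\<^sub>v ?y)))"
    unfolding LS_x_def Z_eq[OF N g] ..
  also have "minv ?G *\<^sub>v (of_nat N \<cdot>\<^sub>v (?G *\<^sub>v ?y)) = of_nat N \<cdot>\<^sub>v (minv ?G *\<^sub>v (?G *\<^sub>v ?y))"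
    by (rule mult_mat_vec[OF Mc]) (use Gc yv_carrier in auto)
  also have "minv ?G *\<^sub>v (?G *\<^sub>v ?y) = (minv ?G * ?G) *\<^sub>v ?y"
    using Mc Gc yv_carrier by (simp)
  also have "\<dots> = ?y" using I yv_carrier by simp
  finally show ?thesis using N by (simp add: smult_smult_assoc)
qed

lemma per_add_mod: assumes "i < N" "j < N" shows "(i + per N (int j - int i)) mod N = j"
proof -
  have N: "N > 0" using assms by simp
  have "int ((i + per N (int j - int i)) mod N) = (int i + (int j - int i) mod int N) mod int N"
    using int_per[OF N] by (simp add: zmod_int)
  also have "\<dots> = int j mod int N" by (simp add: mod_add_right_eq)
  also have "\<dots> = int j" using assms by simp
  finally show ?thesis by simp
qed

lemma rank1_mult:
  assumes x: "x \<in> carrier_vec N" and u: "u \<in> carrier_vec N"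
  shows "mat N N (\<lambda>(i, j). x $ i * cnj (x $ j)) *\<^sub>v u = (\<Sum>j<N. cnj (x $ j) * u $ j) \<cdot>\<^sub>v x"
  by (rule eq_vecI) (use x u in \<open>auto simp: scalar_prod_def atLeast0LessThan sum_distrib_left mult_ac\<close>)

lemma rank1_eig:
  assumes x: "x \<in> carrier_vec N"
    and ev: "eigenvector (mat N N (\<lambda>(i, j). x $ i * cnj (x $ j))) u mu"
  shows "mu = 0 \<or> (mu = complex_of_real (\<Sum>i<N. (cmod (x $ i))\<^sup>2) \<and> (\<exists>b. u = b \<cdot>\<^sub>v x))"
proof (cases "mu = 0")
  case False
  let ?X = "mat N N (\<lambda>(i, j). x $ i * cnj (x $ j))"
  have u: "u \<in> carrier_vec N" and u0: "u \<noteq> 0\<^sub>v N" and eq: "?X *\<^sub>v u = mu \<cdot>\<^sub>v u"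
    using ev unfolding eigenvector_def by auto
  define a where "a = (\<Sum>j<N. cnj (x $ j) * u $ j)"
  have "mu \<cdot>\<^sub>v u = a \<cdot>\<^sub>v x" using eq rank1_mult[OF x u] a_def by simp
  hence muu: "mu \<cdot>\<^sub>v u = a \<cdot>\<^sub>v x" .
  have ub: "u = (a / mu) \<cdot>\<^sub>v x"
  proof (rule eq_vecI)
    fix i assume "i < dim_vec ((a / mu) \<cdot>\<^sub>v x)"
    hence i: "i < N" using x by simp
    have "(mu \<cdot>\<^sub>v u) $ i = (a \<cdot>\<^sub>v x) $ i" using muu by simp
    hence "mu * u $ i = a * x $ i" using i u x by simp
    thus "u $ i = ((a / mu) \<cdot>\<^sub>v x) $ i" using i x False by (simp add: field_simps)
  qed (use u x in simp)
  have a0: "a \<noteq> 0"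
  proof
    assume "a = 0" hence "u = 0\<^sub>v N" using ub x by auto
    thus False using u0 by simp
  qed
  have "a = (\<Sum>j<N. cnj (x $ j) * u $ j)" by (rule a_def)
  also have "\<dots> = (\<Sum>j<N. cnj (x $ j) * ((a / mu) * x $ j))"
    using ub x by (intro sum.cong) auto
  also have "\<dots> = (a / mu) * (\<Sum>j<N. cnj (x $ j) * x $ j)" by (simp add: sum_distrib_left mult_ac)
  also have "(\<Sum>j<N. cnj (x $ j) * x $ j) = complex_of_real (\<Sum>i<N. (cmod (x $ i))\<^sup>2)"
    unfolding of_real_sum by (intro sum.cong refl) (simp only: complex_norm_square mult.commute)
  finally have "mu = complex_of_real (\<Sum>i<N. (cmod (x $ i))\<^sup>2)" using a0 False
    by (simp add: field_simps)
  thus ?thesis using ub by blast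
qed simp




theorem corollary1:
  fixes N W :: nat and x :: "complex vec"
  assumes "N \<ge> 2"
    and "N < 2 * W" and "W < N"
    and "\<forall>j \<in> {2 * W - N .. W}. coprime N j"
    and "x \<in> carrier_vec N"
  shows "(\<forall>l < N. invertible_mat (LS_G N (rect_window N W) l))
       \<and> (\<exists>v. LS_output N (rect_window N W)
                (\<lambda>m k. complex_of_real ((cmod (stft N (rect_window N W) x m k))\<^sup>2)) v)
       \<and> (\<forall>v. LS_output N (rect_window N W)
                (\<lambda>m k. complex_of_real ((cmod (stft N (rect_window N W) x m k))\<^sup>2)) v
              \<longrightarrow> (\<exists>phi :: real. v = exp (\<i> * complex_of_real phi) \<cdot>\<^sub>v x))"
proof -
  note A = assms(1-4)
  have N: "N > 0" using assms(1) by simp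
  have x: "x \<in> carrier_vec N" by fact
  define g where "g = rect_window N W"
  define Y where "Y = (\<lambda>m k. complex_of_real ((cmod (stft N g x m k))\<^sup>2))"
  have gc: "g \<in> carrier_vec N" unfolding g_def rect_window_def by simp
  have C: "\<And>l k. l < N \<Longrightarrow> k < N \<Longrightarrow> (\<Sum>p<N. cc N g l p * E N (- (int k * int p))) \<noteq> 0"
    unfolding g_def by (rule rect_C[OF A])
  have part1: "\<forall>l < N. invertible_mat (LS_G N g l)"
    using G_inv[OF N C] by blast
  define X where "X = mat N N (\<lambda>(i, j). x $ i * cnj (x $ j))"
  have Xeq: "LS_X N g Y = X"
  proof (rule eq_matI)
    fix i j assume ij: "i < dim_row X" "j < dim_col X"
    hence i: "i < N" and j: "j < N" unfolding X_def by auto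
    have pl: "per N (int j - int i) < N" by (rule per_lt[OF N])
    have "LS_X N g Y $$ (i, j) = LS_x N g Y (per N (int j - int i)) $ i"
      unfolding LS_X_def using i j by simp
    also have "\<dots> = yv N x (per N (int j - int i)) $ i"
      using LS_x_eq[OF N gc C[OF pl], of x] unfolding Y_def by simp
    also have "\<dots> = x $ i * cnj (x $ j)"
      unfolding yv_def using i j per_add_mod[OF i j] by simp
    finally show "LS_X N g Y $$ (i, j) = X $$ (i, j)" unfolding X_def using i j by simp
  qed (auto simp: LS_X_def X_def)
  have Xc: "X \<in> carrier_mat N N" unfolding X_def by simp
  define s where "s = (\<Sum>i<N. (cmod (x $ i))\<^sup>2)"
  have s0: "s \<ge> 0" unfolding s_def by (simp add: sum_nonneg)
  have xz: "x = 0\<^sub>v N" if "s = 0"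
  proof (rule eq_vecI)
    fix i assume "i < dim_vec (0\<^sub>v N :: complex vec)"
    hence i: "i < N" by simp
    have "\<forall>i\<in>{..<N}. (cmod (x $ i))\<^sup>2 = 0"
      using that unfolding s_def by (subst sum_nonneg_eq_0_iff[symmetric]) auto
    thus "x $ i = 0\<^sub>v N $ i" using i by simp
  qed (use x in simp)
  have Xmul: "X *\<^sub>v u = (\<Sum>j<N. cnj (x $ j) * u $ j) \<cdot>\<^sub>v x" if "u \<in> carrier_vec N" for u
    unfolding X_def by (rule rank1_mult[OF x that])
  have xx: "(\<Sum>j<N. cnj (x $ j) * x $ j) = complex_of_real s"
    unfolding s_def of_real_sum by (intro sum.cong refl) (simp only: complex_norm_square mult.commute)
  have eigs: "mu = 0 \<or> (mu = complex_of_real s \<and> (\<exists>b. u = b \<cdot>\<^sub>v x))" if "eigenvector X u mu" for u mu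
    using rank1_eig[OF x, of u mu] that unfolding X_def s_def by blast
  have eigvals: "mu = 0 \<or> mu = s" if "eigenvalue X (complex_of_real mu)" for mu
    using that eigs unfolding eigenvalue_def by fastforce
  have dX: "dim_row X = N" unfolding X_def by simp
  have part2: "\<exists>v. LS_output N g Y v"
  proof (cases "s = 0")
    case True
    define u :: "complex vec" where "u = unit_vec N 0"
    have uc: "u \<in> carrier_vec N" unfolding u_def by simp
    have "eigenvector X u (complex_of_real 0)"
      unfolding eigenvector_def dX using uc N Xmul[OF uc] xz[OF True]
      by (auto simp: u_def)
    moreover have "\<forall>mu :: real. eigenvalue X (complex_of_real mu) \<longrightarrow> mu \<le> 0"
      using eigvals True by fastforce
    moreover have "(\<Sum>i<N. (cmod (u $ i))\<^sup>2) = 1"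
      using N unfolding u_def by (simp add: unit_vec_def if_distrib[of "\<lambda>z. (cmod z)\<^sup>2"] cong: if_cong)
    ultimately show ?thesis unfolding LS_output_def Xeq by blast
  next
    case False
    hence sp: "s > 0" using s0 by simp
    define u where "u = complex_of_real (1 / sqrt s) \<cdot>\<^sub>v x"
    have uc: "u \<in> carrier_vec N" unfolding u_def using x by simp
    have cs: "(\<Sum>j<N. cnj (x $ j) * u $ j) = complex_of_real (1 / sqrt s) * complex_of_real s"
      unfolding xx[symmetric] u_def sum_distrib_left using x by (intro sum.cong refl) auto
    have "X *\<^sub>v u = (\<Sum>j<N. cnj (x $ j) * u $ j) \<cdot>\<^sub>v x" by (rule Xmul[OF uc])
    also have "\<dots> = (complex_of_real (1 / sqrt s) * complex_of_real s) \<cdot>\<^sub>v x" unfolding cs ..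
    also have "\<dots> = complex_of_real s \<cdot>\<^sub>v u"
      unfolding u_def smult_smult_assoc by (simp add: mult.commute)
    finally have "X *\<^sub>v u = complex_of_real s \<cdot>\<^sub>v u" .
    moreover have "u \<noteq> 0\<^sub>v N"
    proof
      assume "u = 0\<^sub>v N"
      moreover have "x = complex_of_real (sqrt s) \<cdot>\<^sub>v u"
        unfolding u_def smult_smult_assoc using sp x by (simp flip: of_real_mult)
      ultimately have "x = 0\<^sub>v N" by (auto intro!: eq_vecI)
      hence "s = 0" unfolding s_def by simp
      thus False using sp by simp
    qed
    ultimately have "eigenvector X u (complex_of_real s)"
      unfolding eigenvector_def dX using uc by auto
    moreover have "\<forall>mu :: real. eigenvalue X (complex_of_real mu) \<longrightarrow> mu \<le> s"
      using eigvals s0 by fastforce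
    moreover have "(\<Sum>i<N. (cmod (u $ i))\<^sup>2) = 1"
    proof -
      have "(\<Sum>i<N. (cmod (u $ i))\<^sup>2) = (\<Sum>i<N. (cmod (x $ i))\<^sup>2 / s)"
        unfolding u_def using x sp by (intro sum.cong refl) (simp add: norm_divide power_divide)
      also have "\<dots> = s / s" by (simp only: sum_divide_distrib[symmetric] s_def)
      finally show ?thesis using sp by simp
    qed
    ultimately show ?thesis unfolding LS_output_def Xeq by blast
  qed
  have part3: "\<forall>v. LS_output N g Y v \<longrightarrow> (\<exists>phi :: real. v = exp (\<i> * complex_of_real phi) \<cdot>\<^sub>v x)"
  proof (intro allI impI)
    fix v assume "LS_output N g Y v"
    then obtain lam u where ev: "eigenvector X u (complex_of_real lam)"
      and mx: "\<forall>mu :: real. eigenvalue X (complex_of_real mu) \<longrightarrow> mu \<le> lam"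
      and un: "(\<Sum>i<N. (cmod (u $ i))\<^sup>2) = 1"
      and vdef: "v = complex_of_real (sqrt lam) \<cdot>\<^sub>v u"
      unfolding LS_output_def Xeq by blast
    have uc: "u \<in> carrier_vec N" using ev unfolding eigenvector_def dX by simp
    show "\<exists>phi :: real. v = exp (\<i> * complex_of_real phi) \<cdot>\<^sub>v x"
    proof (cases "s = 0")
      case True
      have "lam = 0" using eigs[OF ev] True by auto
      hence "v = 0\<^sub>v N" unfolding vdef using uc by auto
      moreover have "exp (\<i> * complex_of_real 0) \<cdot>\<^sub>v x = 0\<^sub>v N" using xz[OF True] by simp
      ultimately show ?thesis by metis
    next
      case False
      hence sp: "s > 0" using s0 by simp
      have "x \<noteq> 0\<^sub>v N" using sp xz unfolding s_def by auto
      moreover have "X *\<^sub>v x = complex_of_real s \<cdot>\<^sub>v x" unfolding Xmul[OF x] xx ..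
      ultimately have "eigenvalue X (complex_of_real s)"
        unfolding eigenvalue_def eigenvector_def dX using x by blast
      hence "s \<le> lam" using mx by blast
      hence "complex_of_real lam \<noteq> 0" using sp by simp
      then obtain b where lams: "complex_of_real lam = complex_of_real s" and ub: "u = b \<cdot>\<^sub>v x"
        using eigs[OF ev] by blast
      have ls: "lam = s" using lams by simp
      have "1 = (\<Sum>i<N. (cmod b)\<^sup>2 * (cmod (x $ i))\<^sup>2)"
        unfolding un[symmetric] ub using x by (intro sum.cong refl) (simp add: norm_mult power_mult_distrib)
      also have "\<dots> = (cmod b)\<^sup>2 * s" unfolding s_def by (simp add: sum_distrib_left)
      finally have bs: "(cmod b)\<^sup>2 * s = 1" by simp
      define z where "z = complex_of_real (sqrt s) * b"
      have "(cmod z)\<^sup>2 = 1" unfolding z_def using sp bs by (simp add: norm_mult power_mult_distrib mult.commute)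
      hence cz: "cmod z = 1" using norm_ge_zero[of z] by (auto simp: power2_eq_1_iff)
      hence "z = exp (\<i> * complex_of_real (Arg z))"
        using rcis_cmod_Arg[of z] cz unfolding rcis_def cis_conv_exp by simp
      moreover have "v = z \<cdot>\<^sub>v x" unfolding vdef ub ls z_def by (simp add: smult_smult_assoc)
      ultimately show ?thesis by metis
    qed
  qed
  show ?thesis using part1 part2 part3 unfolding g_def Y_def by blast
qed



end
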